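(* Let $\mathcal A=(S,R)$ be a finitary argumentation network ($S\neq\varnothing$, $R\subseteq S\times S$, each element has finitely many attackers), and let $\Delta_{\mathcal A}$ be the $\mathbf{CN}$-theory $$\Delta_{\mathcal A}=\{x\mid x\in S \text{ unattacked}\}\cup\{y\leftrightarrow \textstyle\bigwedge_{zRy}Nz\mid y\in S\}\cup\{z\to Ny\mid zRy\}\cup\{(\textstyle\bigwedge_{zRy}\neg z)\wedge(\bigvee_{zRy}\neg Nz)\to \neg y\wedge\neg Ny\mid y\in S\}.$$ Let $E=\{x\in S\mid \Delta_{\mathcal A}\vdash_{\mathbf{CN}}x\}$. Then $E$ is the grounded extension of $\mathcal A$.
   Context: The logic $\mathbf{CN}$: the elements of $S$ are basic atoms; atomic formulas are $q$ and $Nq$ for basic atoms $q$; formulas are built with classical connectives; $\Delta\vdash_{\mathbf{CN}}A$ iff $\Delta\cup\{Nq\to\neg q\}\vdash A$ in classical propositional logic (treating each $q$ and $Nq$ as distinct classical atoms). Empty conjunctions are $\top$, empty disjunctions $\bot$. A complete extension of $(S,R)$ is a conflict-free set $E\subseteq S$ (no $x,y\in E$ with $xRy$) which contains exactly those arguments it defends ($x$ is defended by $E$ if every attacker of $x$ is attacked by some element of $E$); equivalently, the set of arguments labelled in by a legitimate Caminada labelling. The grounded (ground) extension is the least complete extension with respect to inclusion. *)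

theory Defs
  imports Main
begin

definition attackers :: "('a \<times> 'a) set \<Rightarrow> 'a \<Rightarrow> 'a set" where
  "attackers R y = {z. (z, y) \<in> R}"

definition finitary_network :: "'a set \<Rightarrow> ('a \<times> 'a) set \<Rightarrow> bool" where
  "finitary_network S R \<longleftrightarrow> S \<noteq> {} \<and> R \<subseteq> S \<times> S \<and> (\<forall>y\<in>S. finite (attackers R y))"

definition conflict_free :: "('a \<times> 'a) set \<Rightarrow> 'a set \<Rightarrow> bool" where
  "conflict_free R E \<longleftrightarrow> (\<forall>x\<in>E. \<forall>y\<in>E. (x, y) \<notin> R)"

definition defends :: "('a \<times> 'a) set \<Rightarrow> 'a set \<Rightarrow> 'a \<Rightarrow> bool" where
  "defends R E x \<longleftrightarrow> (\<forall>y. (y, x) \<in> R \<longrightarrow> (\<exists>z\<in>E. (z, y) \<in> R))"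

definition complete_extension :: "'a set \<Rightarrow> ('a \<times> 'a) set \<Rightarrow> 'a set \<Rightarrow> bool" where
  "complete_extension S R E \<longleftrightarrow>
     E \<subseteq> S \<and> conflict_free R E \<and> E = {x \<in> S. defends R E x}"

definition grounded_extension :: "'a set \<Rightarrow> ('a \<times> 'a) set \<Rightarrow> 'a set \<Rightarrow> bool" where
  "grounded_extension S R E \<longleftrightarrow>
     complete_extension S R E \<and> (\<forall>E'. complete_extension S R E' \<longrightarrow> E \<subseteq> E')"

text \<open>Atomic formulas are q (At q) and Nq (NAt q) for basic atoms q.\<close>
datatype 'a fml =
    At 'a | NAt 'a | FTop | FBot | FNeg "'a fml"
  | FAnd "'a fml" "'a fml" | FOr "'a fml" "'a fml" | FImp "'a fml" "'a fml"

definition FIff :: "'a fml \<Rightarrow> 'a fml \<Rightarrow> 'a fml" where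
  "FIff A B = FAnd (FImp A B) (FImp B A)"

fun BigAnd :: "'a fml list \<Rightarrow> 'a fml" where
  "BigAnd [] = FTop"
| "BigAnd (A # As) = FAnd A (BigAnd As)"

fun BigOr :: "'a fml list \<Rightarrow> 'a fml" where
  "BigOr [] = FBot"
| "BigOr (A # As) = FOr A (BigOr As)"

text \<open>Classical semantics: v interprets the atoms q, w the atoms Nq (as distinct classical atoms).\<close>
fun eval :: "('a \<Rightarrow> bool) \<Rightarrow> ('a \<Rightarrow> bool) \<Rightarrow> 'a fml \<Rightarrow> bool" where
  "eval v w (At q) = v q"
| "eval v w (NAt q) = w q"
| "eval v w FTop = True"
| "eval v w FBot = False"
| "eval v w (FNeg A) = (\<not> eval v w A)"
| "eval v w (FAnd A B) = (eval v w A \<and> eval v w B)"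
| "eval v w (FOr A B) = (eval v w A \<or> eval v w B)"
| "eval v w (FImp A B) = (eval v w A \<longrightarrow> eval v w B)"

text \<open>Classical consequence (semantic; equal to derivability by completeness/compactness).
  Delta |-_CN A iff Delta \<union> {Nq \<rightarrow> \<not>q | q basic atom} classically entails A.\<close>
definition CN_entails :: "'a set \<Rightarrow> 'a fml set \<Rightarrow> 'a fml \<Rightarrow> bool" where
  "CN_entails S \<Delta> A \<longleftrightarrow>
     (\<forall>v w. (\<forall>q\<in>S. eval v w (FImp (NAt q) (FNeg (At q)))) \<longrightarrow>
            (\<forall>B\<in>\<Delta>. eval v w B) \<longrightarrow> eval v w A)"

definition att_list :: "('a \<times> 'a) set \<Rightarrow> 'a \<Rightarrow> 'a list" where
  "att_list R y = (SOME xs. set xs = attackers R y)"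

definition Delta :: "'a set \<Rightarrow> ('a \<times> 'a) set \<Rightarrow> 'a fml set" where
  "Delta S R =
     {At x | x. x \<in> S \<and> attackers R x = {}}
   \<union> {FIff (At y) (BigAnd (map NAt (att_list R y))) | y. y \<in> S}
   \<union> {FImp (At z) (NAt y) | z y. (z, y) \<in> R}
   \<union> {FImp (FAnd (BigAnd (map (\<lambda>z. FNeg (At z)) (att_list R y)))
                 (BigOr (map (\<lambda>z. FNeg (NAt z)) (att_list R y))))
           (FAnd (FNeg (At y)) (FNeg (NAt y))) | y. y \<in> S}"

end

theory Submission
  imports Defs
begin

lemma eval_BigAnd: "eval v w (BigAnd xs) \<longleftrightarrow> (\<forall>A\<in>set xs. eval v w A)"
  by (induction xs) auto

lemma eval_BigOr: "eval v w (BigOr xs) \<longleftrightarrow> (\<exists>A\<in>set xs. eval v w A)"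
  by (induction xs) auto

lemma set_att_list: "finite (attackers R y) \<Longrightarrow> set (att_list R y) = attackers R y"
  unfolding att_list_def by (rule someI_ex) (rule finite_list)

definition FF :: "'a set \<Rightarrow> ('a \<times> 'a) set \<Rightarrow> 'a set \<Rightarrow> 'a set" where
  "FF S R E = {x \<in> S. defends R E x}"

lemma FF_mono: "E \<subseteq> E' \<Longrightarrow> FF S R E \<subseteq> FF S R E'"
  unfolding FF_def defends_def by blast

lemma FF_cf: "conflict_free R E \<Longrightarrow> conflict_free R (FF S R E)"
  unfolding FF_def defends_def conflict_free_def by blast

definition GG :: "'a set \<Rightarrow> ('a \<times> 'a) set \<Rightarrow> nat \<Rightarrow> 'a set" where
  "GG S R n = ((FF S R) ^^ n) {}"

lemma GG_Suc: "GG S R n \<subseteq> GG S R (Suc n)"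
proof (induction n)
  case 0 then show ?case by (simp add: GG_def)
next
  case (Suc n) then show ?case unfolding GG_def by (simp add: FF_mono)
qed

lemma GG_mono: "m \<le> n \<Longrightarrow> GG S R m \<subseteq> GG S R n"
  using GG_Suc by (metis lift_Suc_mono_le)

lemma GG_cf: "conflict_free R (GG S R n)"
proof (induction n)
  case 0 then show ?case by (simp add: GG_def conflict_free_def)
next
  case (Suc n) then show ?case unfolding GG_def by (simp add: FF_cf)
qed

lemma GU_cf: "conflict_free R (\<Union>n. GG S R n)"
  unfolding conflict_free_def
proof (intro ballI)
  fix x y assume "x \<in> (\<Union>n. GG S R n)" "y \<in> (\<Union>n. GG S R n)"
  then obtain m n where "x \<in> GG S R m" "y \<in> GG S R n" by auto
  then have "x \<in> GG S R (max m n)" "y \<in> GG S R (max m n)"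
    using GG_mono[of m "max m n" S R] GG_mono[of n "max m n" S R] by auto
  then show "(x, y) \<notin> R" using GG_cf[where S=S and R=R and n="max m n"] unfolding conflict_free_def by blast
qed

lemma GG_sub_complete:
  assumes "complete_extension S R E" shows "GG S R n \<subseteq> E"
proof (induction n)
  case 0 then show ?case by (simp add: GG_def)
next
  case (Suc n)
  have "GG S R (Suc n) = FF S R (GG S R n)" by (simp add: GG_def)
  also have "\<dots> \<subseteq> FF S R E" using Suc FF_mono by blast
  also have "\<dots> = E" using assms unfolding complete_extension_def FF_def by blast
  finally show ?case .
qed

lemma finite_choice_n:
  assumes "finite B" "\<forall>y\<in>B. \<exists>n. \<exists>z\<in>GG S R n. (z, y) \<in> R"
  shows "\<exists>n. \<forall>y\<in>B. \<exists>z\<in>GG S R n. (z, y) \<in> R"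
  using assms
proof (induction B rule: finite_induct)
  case empty then show ?case by auto
next
  case (insert y B)
  then obtain n where n: "\<forall>y\<in>B. \<exists>z\<in>GG S R n. (z, y) \<in> R" by auto
  from insert obtain m where m: "\<exists>z\<in>GG S R m. (z, y) \<in> R" by auto
  have s1: "GG S R m \<subseteq> GG S R (max m n)" by (rule GG_mono) simp
  have s2: "GG S R n \<subseteq> GG S R (max m n)" by (rule GG_mono) simp
  have "\<forall>y'\<in>insert y B. \<exists>z\<in>GG S R (max m n). (z, y') \<in> R"
  proof
    fix y' assume "y' \<in> insert y B"
    then show "\<exists>z\<in>GG S R (max m n). (z, y') \<in> R"
    proof
      assume "y' = y" then show ?thesis using m s1 by blast
    next
      assume "y' \<in> B" then show ?thesis using n s2 by blast
    qed
  qed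
  then show ?case by blast
qed

lemma GU_fix:
  assumes fin: "finitary_network S R"
  shows "FF S R (\<Union>n. GG S R n) = (\<Union>n. GG S R n)"
proof
  show "FF S R (\<Union>n. GG S R n) \<subseteq> (\<Union>n. GG S R n)"
  proof
    fix x assume x: "x \<in> FF S R (\<Union>n. GG S R n)"
    then have xS: "x \<in> S" and d: "defends R (\<Union>n. GG S R n) x" by (auto simp: FF_def)
    have "finite (attackers R x)" using fin xS by (auto simp: finitary_network_def)
    moreover have "\<forall>y\<in>attackers R x. \<exists>n. \<exists>z\<in>GG S R n. (z, y) \<in> R"
      using d by (auto simp: defends_def attackers_def)
    ultimately obtain n where "\<forall>y\<in>attackers R x. \<exists>z\<in>GG S R n. (z, y) \<in> R"
      using finite_choice_n by blast
    then have "x \<in> FF S R (GG S R n)" using xS by (auto simp: FF_def defends_def attackers_def)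
    then have "x \<in> GG S R (Suc n)" by (simp add: GG_def)
    then show "x \<in> (\<Union>n. GG S R n)" by blast
  qed
next
  show "(\<Union>n. GG S R n) \<subseteq> FF S R (\<Union>n. GG S R n)"
  proof
    fix x assume "x \<in> (\<Union>n. GG S R n)"
    then obtain n where "x \<in> GG S R n" by auto
    then show "x \<in> FF S R (\<Union>n. GG S R n)"
    proof (cases n)
      case 0 then show ?thesis using \<open>x \<in> GG S R n\<close> by (simp add: GG_def)
    next
      case (Suc m)
      have "GG S R m \<subseteq> (\<Union>n. GG S R n)" by blast
      then have "FF S R (GG S R m) \<subseteq> FF S R (\<Union>n. GG S R n)" by (rule FF_mono)
      moreover have "x \<in> FF S R (GG S R m)" using \<open>x \<in> GG S R n\<close> Suc by (simp add: GG_def)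
      ultimately show ?thesis by blast
    qed
  qed
qed

lemma GU_complete:
  assumes fin: "finitary_network S R"
  shows "complete_extension S R (\<Union>n. GG S R n)"
proof -
  let ?G = "\<Union>n. GG S R n"
  have e: "FF S R ?G = ?G" by (rule GU_fix[OF fin])
  have "?G \<subseteq> S"
  proof -
    have "FF S R ?G \<subseteq> S" unfolding FF_def by blast
    then show ?thesis using e by simp
  qed
  moreover have "?G = {x \<in> S. defends R ?G x}" using e unfolding FF_def by simp
  ultimately show ?thesis using GU_cf unfolding complete_extension_def by blast
qed

lemma complete_model:
  assumes fin: "finitary_network S R" and E: "complete_extension S R E"
  defines "v \<equiv> (\<lambda>x. x \<in> E)" and "w \<equiv> (\<lambda>y. \<exists>z\<in>E. (z, y) \<in> R)"
  shows "(\<forall>q\<in>S. eval v w (FImp (NAt q) (FNeg (At q)))) \<and> (\<forall>B\<in>Delta S R. eval v w B)"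
proof -
  have RS: "R \<subseteq> S \<times> S" and finA: "\<And>y. y \<in> S \<Longrightarrow> finite (attackers R y)"
    using fin by (auto simp: finitary_network_def)
  have ES: "E \<subseteq> S" and cf: "conflict_free R E" and EF: "E = {x \<in> S. defends R E x}"
    using E by (auto simp: complete_extension_def)
  have 1: "\<forall>q\<in>S. eval v w (FImp (NAt q) (FNeg (At q)))"
    using cf by (auto simp: v_def w_def conflict_free_def)
  have 2: "\<forall>B\<in>Delta S R. eval v w B"
  proof
    fix B assume "B \<in> Delta S R"
    then consider (a) x where "B = At x" "x \<in> S" "attackers R x = {}"
      | (b) y where "B = FIff (At y) (BigAnd (map NAt (att_list R y)))" "y \<in> S"
      | (c) z y where "B = FImp (At z) (NAt y)" "(z, y) \<in> R"
      | (d) y where "B = FImp (FAnd (BigAnd (map (\<lambda>z. FNeg (At z)) (att_list R y)))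
                 (BigOr (map (\<lambda>z. FNeg (NAt z)) (att_list R y))))
           (FAnd (FNeg (At y)) (FNeg (NAt y)))" "y \<in> S"
      unfolding Delta_def by blast
    then show "eval v w B"
    proof cases
      case a
      then have "defends R E x" by (auto simp: defends_def attackers_def)
      then show ?thesis using a EF by (auto simp: v_def)
    next
      case b
      have "set (att_list R y) = attackers R y" by (rule set_att_list[OF finA[OF b(2)]])
      then show ?thesis using b EF
        by (auto simp: FIff_def eval_BigAnd v_def w_def defends_def attackers_def)
    next
      case c then show ?thesis by (auto simp: v_def w_def)
    next
      case d
      have "set (att_list R y) = attackers R y" by (rule set_att_list[OF finA[OF d(2)]])
      moreover have "\<And>y. y \<in> E \<Longrightarrow> defends R E y" using EF by blast
      ultimately show ?thesis using d
        by (simp add: eval_BigAnd eval_BigOr v_def w_def defends_def attackers_def) blast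
    qed
  qed
  show ?thesis using 1 2 by blast
qed

lemma model_complete:
  assumes fin: "finitary_network S R"
    and m1: "\<forall>q\<in>S. eval v w (FImp (NAt q) (FNeg (At q)))"
    and m2: "\<forall>B\<in>Delta S R. eval v w B"
  shows "complete_extension S R {x \<in> S. v x}"
proof -
  have RS: "R \<subseteq> S \<times> S" and finA: "\<And>y. y \<in> S \<Longrightarrow> finite (attackers R y)"
    using fin by (auto simp: finitary_network_def)
  have iff: "v y \<longleftrightarrow> (\<forall>z. (z, y) \<in> R \<longrightarrow> w z)" if "y \<in> S" for y
  proof -
    have "FIff (At y) (BigAnd (map NAt (att_list R y))) \<in> Delta S R"
      using that unfolding Delta_def by blast
    then have "eval v w (FIff (At y) (BigAnd (map NAt (att_list R y))))" using m2 by blast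
    moreover have "set (att_list R y) = attackers R y" by (rule set_att_list[OF finA[OF that]])
    ultimately show ?thesis by (auto simp: FIff_def eval_BigAnd attackers_def)
  qed
  have imp: "v z \<Longrightarrow> (z, y) \<in> R \<Longrightarrow> w y" for z y
  proof -
    assume "v z" "(z, y) \<in> R"
    then have "FImp (At z) (NAt y) \<in> Delta S R" unfolding Delta_def by blast
    then show "w y" using m2 \<open>v z\<close> by fastforce
  qed
  have wch: "w y \<longleftrightarrow> (\<exists>z. (z, y) \<in> R \<and> v z)" if "y \<in> S" for y
  proof
    assume wy: "w y"
    show "\<exists>z. (z, y) \<in> R \<and> v z"
    proof (rule ccontr)
      assume nz: "\<not> (\<exists>z. (z, y) \<in> R \<and> v z)"
      have "FImp (FAnd (BigAnd (map (\<lambda>z. FNeg (At z)) (att_list R y)))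
                 (BigOr (map (\<lambda>z. FNeg (NAt z)) (att_list R y))))
           (FAnd (FNeg (At y)) (FNeg (NAt y))) \<in> Delta S R"
        using that unfolding Delta_def by blast
      then have e: "eval v w (FImp (FAnd (BigAnd (map (\<lambda>z. FNeg (At z)) (att_list R y)))
                 (BigOr (map (\<lambda>z. FNeg (NAt z)) (att_list R y))))
           (FAnd (FNeg (At y)) (FNeg (NAt y))))" using m2 by blast
      have sa: "set (att_list R y) = attackers R y" by (rule set_att_list[OF finA[OF that]])
      show False
      proof (cases "\<forall>z. (z, y) \<in> R \<longrightarrow> w z")
        case True
        then have "v y" using iff that by blast
        then show False using m1 that wy by auto
      next
        case False
        then show False using e sa nz wy by (auto simp: eval_BigAnd eval_BigOr attackers_def)
      qed
    qed
  next
    assume "\<exists>z. (z, y) \<in> R \<and> v z" then show "w y" using imp by blast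
  qed
  let ?E = "{x \<in> S. v x}"
  have cf: "conflict_free R ?E"
    unfolding conflict_free_def using imp m1 by fastforce
  have "?E = {x \<in> S. defends R ?E x}"
  proof (intro set_eqI iffI)
    fix x assume x: "x \<in> ?E"
    have "defends R ?E x"
      unfolding defends_def
    proof (intro allI impI)
      fix y assume "(y, x) \<in> R"
      then have "w y" "y \<in> S" using iff x RS by auto
      then show "\<exists>z\<in>?E. (z, y) \<in> R" using wch RS by blast
    qed
    then show "x \<in> {x \<in> S. defends R ?E x}" using x by blast
  next
    fix x assume x: "x \<in> {x \<in> S. defends R ?E x}"
    have "\<forall>z. (z, x) \<in> R \<longrightarrow> w z"
    proof (intro allI impI)
      fix z assume "(z, x) \<in> R"
      then have "z \<in> S" using RS by auto
      then show "w z" using x \<open>(z, x) \<in> R\<close> wch unfolding defends_def by blast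
    qed
    then show "x \<in> ?E" using iff x by blast
  qed
  then show ?thesis using cf unfolding complete_extension_def by blast
qed

theorem theorem8:
  fixes S :: "'a set" and R :: "('a \<times> 'a) set"
  assumes "finitary_network S R"
  shows "grounded_extension S R {x \<in> S. CN_entails S (Delta S R) (At x)}"
proof -
  let ?G = "\<Union>n. GG S R n"
  have Gc: "complete_extension S R ?G" using GU_complete[OF assms] .
  have below: "?G \<subseteq> E" if "complete_extension S R E" for E
    using GG_sub_complete[OF that] by blast
  have eq: "{x \<in> S. CN_entails S (Delta S R) (At x)} = ?G"
  proof (intro set_eqI iffI)
    fix x assume x: "x \<in> {x \<in> S. CN_entails S (Delta S R) (At x)}"
    have "eval (\<lambda>x. x \<in> ?G) (\<lambda>y. \<exists>z\<in>?G. (z, y) \<in> R) (At x)"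
      using x complete_model[OF assms Gc] unfolding CN_entails_def by blast
    then show "x \<in> ?G" by simp
  next
    fix x assume x: "x \<in> ?G"
    have xS: "x \<in> S" using x Gc unfolding complete_extension_def by blast
    have "CN_entails S (Delta S R) (At x)"
      unfolding CN_entails_def
    proof (intro allI impI)
      fix v w
      assume "\<forall>q\<in>S. eval v w (FImp (NAt q) (FNeg (At q)))" "\<forall>B\<in>Delta S R. eval v w B"
      then have "complete_extension S R {x \<in> S. v x}" using model_complete[OF assms] by blast
      then have "x \<in> {x \<in> S. v x}" using below x by blast
      then show "eval v w (At x)" by simp
    qed
    then show "x \<in> {x \<in> S. CN_entails S (Delta S R) (At x)}" using xS by blast
  qed
  show ?thesis unfolding grounded_extension_def eq using Gc below by blast
qed

end
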